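(* For $k\ge2$, let $\mathcal B'$ be the set of $k\times k$ symmetric matrices over $\mathbb F_2$ of rank $k-2$ with every row sum $0$. Then $\#\mathcal B'=2^{\binom{k-1}{2}}\,u_{k-1}\,(2^{k-1}-1)$, where $u_j=\prod_{i=1}^{\lfloor j/2\rfloor}(1-2^{1-2i})$. *)

theory Defs
  imports "HOL-Library.Z2" "Jordan_Normal_Form.DL_Rank"
begin

text \<open>F_2 is the field type bit (HOL-Library.Z2); matrices and rank are those of
  Jordan_Normal_Form (rank = dimension of the column span).\<close>

definition u :: "nat \<Rightarrow> real" where
  "u j = (\<Prod>i = 1..j div 2. (1 - 2 powr (1 - 2 * real i)))"

end

theory Submission
  imports Defs
begin


declare add_bit_eq_xor[simp del] mult_bit_eq_and[simp del]

lemma bit_add_self[simp]: "(x::bit) + x = 0"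
  by (cases x) simp_all

instance bit :: finite
proof
  have "(UNIV :: bit set) = {0,1}" by (auto intro: bit.exhaust)
  then show "finite (UNIV :: bit set)" by (metis finite.emptyI finite.insertI)
qed


lemma card_basis:
  assumes VS: "vectorspace K V" and finB: "finite B" and bas: "vectorspace.basis K V B"
  shows "card (carrier V) = card (carrier K) ^ card B"
proof -
  interpret vectorspace K V by fact
  have BC: "B \<subseteq> carrier V" using bas unfolding basis_def by auto
  have crit: "\<forall>v. v \<in> carrier V \<longrightarrow> (\<exists>! a. a \<in> B \<rightarrow>\<^sub>E carrier K \<and> lincomb a B = v)"
    using iffD1[OF basis_criterion[OF finB BC] bas] .
  have "bij_betw (\<lambda>a. lincomb a B) (B \<rightarrow>\<^sub>E carrier K) (carrier V)"
  proof (rule bij_betwI')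
    fix a b assume a: "a \<in> B \<rightarrow>\<^sub>E carrier K" and b: "b \<in> B \<rightarrow>\<^sub>E carrier K"
    show "(lincomb a B = lincomb b B) = (a = b)"
    proof
      assume eq: "lincomb a B = lincomb b B"
      have "lincomb a B \<in> carrier V" using a BC by (intro lincomb_closed) auto
      then show "a = b" using crit a b eq by metis
    qed simp
  next
    fix a assume a: "a \<in> B \<rightarrow>\<^sub>E carrier K"
    show "lincomb a B \<in> carrier V" using a BC by (intro lincomb_closed) auto
  next
    fix v assume "v \<in> carrier V"
    then show "\<exists>a\<in>B \<rightarrow>\<^sub>E carrier K. v = lincomb a B" using crit by metis
  qed
  then have "card (carrier V) = card (B \<rightarrow>\<^sub>E carrier K)" by (metis bij_betw_same_card)
  also have "\<dots> = card (carrier K) ^ card B" using finB by (simp add: card_PiE)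
  finally show ?thesis .
qed

lemma card_bit_UNIV: "card (UNIV :: bit set) = 2"
proof -
  have "(UNIV :: bit set) = {0, 1}" by (auto intro: bit.exhaust)
  moreover have "card {0::bit, 1} = 2" by simp
  ultimately show ?thesis by simp
qed

lemma card_col_space:
  fixes A :: "bit mat" assumes A: "A \<in> carrier_mat nr nc"
  shows "card ((\<lambda>v. A *\<^sub>v v) ` carrier_vec nc) = 2 ^ vec_space.rank nr A"
proof -
  interpret V: vec_space "TYPE(bit)" nr .
  have S: "set (cols A) \<subseteq> carrier_vec nr" using cols_dim[of A] A by auto
  have lc: "V.lincomb_list c (cols A) = A *\<^sub>v vec nc c" for c
  proof -
    have "V.lincomb_list c (cols A) = mat_of_cols nr (cols A) *\<^sub>v vec (length (cols A)) c"
      by (rule V.lincomb_list_as_mat_mult) (use S in auto)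
    also have "mat_of_cols nr (cols A) = A" using A mat_of_cols_cols[of A] by auto
    finally show ?thesis using A by simp
  qed
  have span_eq: "V.span (set (cols A)) = (\<lambda>v. A *\<^sub>v v) ` carrier_vec nc"
  proof -
    have "V.span (set (cols A)) = V.span_list (cols A)" using V.span_list_as_span[OF S] by simp
    also have "\<dots> = (\<lambda>v. A *\<^sub>v v) ` carrier_vec nc"
    proof (intro equalityI subsetI)
      fix x assume "x \<in> V.span_list (cols A)"
      then obtain c where "x = V.lincomb_list c (cols A)" unfolding V.span_list_def by auto
      then show "x \<in> (\<lambda>v. A *\<^sub>v v) ` carrier_vec nc" using lc by auto
    next
      fix x assume "x \<in> (\<lambda>v. A *\<^sub>v v) ` carrier_vec nc"
      then obtain v where v: "v \<in> carrier_vec nc" and x: "x = A *\<^sub>v v" by auto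
      then have "v = vec nc (\<lambda>i. v $ i)" by auto
      then have "x = V.lincomb_list (\<lambda>i. v $ i) (cols A)" using x lc by metis
      then show "x \<in> V.span_list (cols A)" unfolding V.span_list_def by auto
    qed
    finally show ?thesis .
  qed
  have W: "vectorspace class_ring (V.vs (V.span (set (cols A))))"
    using S V.span_is_subspace V.subspace_is_vs by simp
  have fd: "vectorspace.fin_dim class_ring (V.vs (V.span (set (cols A))))"
    using V.fin_dim_span_cols[OF A] .
  obtain \<beta> where fb: "finite \<beta>" and bb: "vectorspace.basis class_ring (V.vs (V.span (set (cols A)))) \<beta>"
    using vectorspace.finite_basis_exists[OF W fd] by blast
  have "vec_space.rank nr A = vectorspace.dim class_ring (V.vs (V.span (set (cols A))))"
    unfolding V.rank_def ..
  also have "\<dots> = card \<beta>" using vectorspace.dim_basis[OF W fb bb] .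
  finally have r: "vec_space.rank nr A = card \<beta>" .
  have "card (V.span (set (cols A))) = card (carrier (class_ring :: bit ring)) ^ card \<beta>"
    using card_basis[OF W fb bb] by simp
  then show ?thesis using span_eq r by (simp add: card_bit_UNIV)
qed


definition kerM :: "bit mat \<Rightarrow> bit vec set" where
  "kerM A = {v \<in> carrier_vec (dim_col A). A *\<^sub>v v = 0\<^sub>v (dim_row A)}"

lemma card_carrier_vec_bit: "card (carrier_vec n :: bit vec set) = 2 ^ n"
proof -
  have "bij_betw (\<lambda>v. restrict (\<lambda>i. v $ i) {..<n}) (carrier_vec n :: bit vec set) ({..<n} \<rightarrow>\<^sub>E UNIV)"
  proof (rule bij_betwI')
    fix x y :: "bit vec" assume x: "x \<in> carrier_vec n" and y: "y \<in> carrier_vec n"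
    show "(restrict (($) x) {..<n} = restrict (($) y) {..<n}) = (x = y)"
    proof
      assume "restrict (($) x) {..<n} = restrict (($) y) {..<n}"
      then have "\<forall>i<n. x $ i = y $ i" by (metis lessThan_iff restrict_apply')
      then show "x = y" using x y by (intro eq_vecI) auto
    qed simp
  next
    fix x :: "bit vec" assume "x \<in> carrier_vec n" then show "restrict (($) x) {..<n} \<in> {..<n} \<rightarrow>\<^sub>E UNIV" by auto
  next
    fix f :: "nat \<Rightarrow> bit" assume f: "f \<in> {..<n} \<rightarrow>\<^sub>E UNIV"
    show "\<exists>x\<in>carrier_vec n. f = restrict (($) x) {..<n}"
      by (rule bexI[of _ "vec n f"]) (use f in \<open>auto simp: fun_eq_iff PiE_def extensional_def\<close>)
  qed
  then have "card (carrier_vec n :: bit vec set) = card ({..<n} \<rightarrow>\<^sub>E (UNIV :: bit set))"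
    by (metis bij_betw_same_card)
  also have "\<dots> = 2 ^ n" by (simp add: card_PiE card_bit_UNIV)
  finally show ?thesis .
qed

lemma finite_carrier_vec_bit[simp]: "finite (carrier_vec n :: bit vec set)"
  using card_carrier_vec_bit[of n] by (metis card.infinite power_not_zero zero_neq_numeral)

lemma card_ker_image:
  fixes A :: "bit mat" assumes A: "A \<in> carrier_mat nr nc"
  shows "card (carrier_vec nc :: bit vec set) = card ((\<lambda>v. A *\<^sub>v v) ` carrier_vec nc) * card (kerM A)"
proof -
  define F where "F y = {x \<in> carrier_vec nc. A *\<^sub>v x = y}" for y
  have cv: "carrier_vec nc = (\<Union>y\<in>(\<lambda>v. A *\<^sub>v v) ` carrier_vec nc. F y)"
    unfolding F_def by auto
  have fin: "finite (F y)" for y unfolding F_def by auto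
  have ker: "kerM A = {z \<in> carrier_vec nc. A *\<^sub>v z = 0\<^sub>v nr}"
    unfolding kerM_def using A by auto
  have cF: "card (F y) = card (kerM A)" if y: "y \<in> (\<lambda>v. A *\<^sub>v v) ` carrier_vec nc" for y
  proof -
    obtain x0 where x0: "x0 \<in> carrier_vec nc" and y: "y = A *\<^sub>v x0" using y by auto
    have "bij_betw (\<lambda>z. x0 + z) (kerM A) (F y)"
    proof (rule bij_betwI')
      fix z z' assume "z \<in> kerM A" "z' \<in> kerM A"
      then have z: "z \<in> carrier_vec nc" and z': "z' \<in> carrier_vec nc" using ker by auto
      show "(x0 + z = x0 + z') = (z = z')"
      proof
        assume "x0 + z = x0 + z'"
        then have "\<forall>i<nc. x0 $ i + z $ i = x0 $ i + z' $ i" using z z' x0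
          by (metis carrier_vecD index_add_vec(1))
        then show "z = z'" using z z' by (intro eq_vecI) auto
      qed simp
    next
      fix z assume "z \<in> kerM A"
      then have z: "z \<in> carrier_vec nc" and Az: "A *\<^sub>v z = 0\<^sub>v nr" using ker by auto
      have "A *\<^sub>v (x0 + z) = A *\<^sub>v x0 + A *\<^sub>v z" using mult_add_distrib_mat_vec[OF A x0 z] .
      also have "\<dots> = A *\<^sub>v x0" using Az A x0 by simp
      finally show "x0 + z \<in> F y" unfolding F_def y using x0 z by simp
    next
      fix x assume "x \<in> F y"
      then have x: "x \<in> carrier_vec nc" and Ax: "A *\<^sub>v x = y" unfolding F_def by auto
      have "A *\<^sub>v (x - x0) = A *\<^sub>v x - A *\<^sub>v x0" using mult_minus_distrib_mat_vec[OF A x x0] .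
      also have "\<dots> = 0\<^sub>v nr" using Ax y A x0 by auto
      finally have "x - x0 \<in> kerM A" using ker x x0 by auto
      moreover have "x = x0 + (x - x0)" using x x0 by (intro eq_vecI) auto
      ultimately show "\<exists>z\<in>kerM A. x = x0 + z" by blast
    qed
    then show ?thesis by (metis bij_betw_same_card)
  qed
  have "card (\<Union>y\<in>(\<lambda>v. A *\<^sub>v v) ` carrier_vec nc. F y) = (\<Sum>y\<in>(\<lambda>v. A *\<^sub>v v) ` carrier_vec nc. card (F y))"
    by (rule card_UN_disjoint) (auto simp: fin F_def)
  then have "card (carrier_vec nc :: bit vec set) = (\<Sum>y\<in>(\<lambda>v. A *\<^sub>v v) ` carrier_vec nc. card (F y))"
    using cv by simp
  also have "\<dots> = (\<Sum>y\<in>(\<lambda>v. A *\<^sub>v v) ` carrier_vec nc. card (kerM A))"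
    using cF by (intro sum.cong) auto
  finally show ?thesis by simp
qed

lemma ker_rank:
  fixes A :: "bit mat" assumes A: "A \<in> carrier_mat n n"
  shows "card (kerM A) * 2 ^ vec_space.rank n A = 2 ^ n"
  using card_ker_image[OF A] card_col_space[OF A] card_carrier_vec_bit[of n] by simp

lemma ker_card_rank:
  fixes A :: "bit mat" assumes A: "A \<in> carrier_mat n n"
  shows "vec_space.rank n A \<le> n \<and> card (kerM A) = 2 ^ (n - vec_space.rank n A)"
proof -
  have "0\<^sub>v n \<in> kerM A" using A by (auto simp: kerM_def)
  moreover have "finite (kerM A)"
    by (rule finite_subset[of _ "carrier_vec n"]) (use A in \<open>auto simp: kerM_def\<close>)
  ultimately have c: "card (kerM A) \<ge> 1" by (metis One_nat_def Suc_leI card_gt_0_iff empty_iff)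
  have e: "card (kerM A) * 2 ^ vec_space.rank n A = 2 ^ n" by (rule ker_rank[OF A])
  then have "(2::nat) ^ vec_space.rank n A \<le> 2 ^ n" using c
    by (metis le_add2 mult_le_mono1 nat_mult_1 add.commute le_Suc_ex)
  then have r: "vec_space.rank n A \<le> n" by simp
  then have "(2::nat) ^ n = 2 ^ (n - vec_space.rank n A) * 2 ^ vec_space.rank n A"
    by (simp flip: power_add)
  with e show ?thesis using r by simp
qed




definition vtl :: "'a vec \<Rightarrow> 'a vec" where "vtl x = vec (dim_vec x - 1) (\<lambda>i. x $ Suc i)"

lemma vtl_carrier[simp]: "x \<in> carrier_vec (Suc m) \<Longrightarrow> vtl x \<in> carrier_vec m"
  unfolding vtl_def by auto

lemma vtl_vCons[simp]: "vtl (vCons t y) = y"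
  unfolding vtl_def by (intro eq_vecI) auto

lemma vCons_vtl: "x \<in> carrier_vec (Suc m) \<Longrightarrow> vCons (x $ 0) (vtl x) = x"
  unfolding vtl_def by (intro eq_vecI) (auto simp: vec_index_vCons)

lemma vCons_eq_iff[simp]: "vCons t y = vCons s z \<longleftrightarrow> t = s \<and> y = z"
  by (metis vec_index_vCons_0 vtl_vCons)

definition bord :: "nat \<Rightarrow> 'a \<Rightarrow> 'a vec \<Rightarrow> 'a mat \<Rightarrow> 'a mat" where
  "bord m a b C = mat (Suc m) (Suc m) (\<lambda>(i,j). if i = 0 then (if j = 0 then a else b $ (j-1))
       else (if j = 0 then b $ (i-1) else C $$ (i-1, j-1)))"

lemma dim_bord[simp]: "dim_row (bord m a b C) = Suc m" "dim_col (bord m a b C) = Suc m"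
  by (simp_all add: bord_def)

lemma bord_carrier[simp]: "bord m a b C \<in> carrier_mat (Suc m) (Suc m)"
  unfolding bord_def by auto

lemma bord_mult:
  fixes C :: "'a :: comm_ring_1 mat"
  assumes b: "b \<in> carrier_vec m" and C: "C \<in> carrier_mat m m" and y: "y \<in> carrier_vec m"
  shows "bord m a b C *\<^sub>v vCons t y = vCons (a * t + b \<bullet> y) (t \<cdot>\<^sub>v b + C *\<^sub>v y)"
proof (rule eq_vecI)
  show "dim_vec (bord m a b C *\<^sub>v vCons t y) = dim_vec (vCons (a * t + b \<bullet> y) (t \<cdot>\<^sub>v b + C *\<^sub>v y))"
    using b C y by simp
  fix i assume "i < dim_vec (vCons (a * t + b \<bullet> y) (t \<cdot>\<^sub>v b + C *\<^sub>v y))"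
  then have i: "i < Suc m" using b C by simp
  have "(bord m a b C *\<^sub>v vCons t y) $ i = (\<Sum>k = 0..<Suc m. bord m a b C $$ (i, k) * vCons t y $ k)"
    using i y unfolding mult_mat_vec_def scalar_prod_def by (simp add: row_def)
  also have "\<dots> = bord m a b C $$ (i, 0) * t + (\<Sum>k = 0..<m. bord m a b C $$ (i, Suc k) * y $ k)"
    by (subst sum.atLeast0_lessThan_Suc_shift) (simp add: o_def)
  finally have L: "(bord m a b C *\<^sub>v vCons t y) $ i = bord m a b C $$ (i, 0) * t + (\<Sum>k = 0..<m. bord m a b C $$ (i, Suc k) * y $ k)" .
  show "(bord m a b C *\<^sub>v vCons t y) $ i = vCons (a * t + b \<bullet> y) (t \<cdot>\<^sub>v b + C *\<^sub>v y) $ i"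
  proof (cases i)
    case 0
    have "(\<Sum>k = 0..<m. bord m a b C $$ (0, Suc k) * y $ k) = b \<bullet> y"
      unfolding scalar_prod_def using y by (intro sum.cong) (auto simp: bord_def)
    then show ?thesis using L 0 by (simp add: bord_def)
  next
    case (Suc i')
    then have i': "i' < m" using i by simp
    have "(\<Sum>k = 0..<m. bord m a b C $$ (i, Suc k) * y $ k) = (C *\<^sub>v y) $ i'"
      unfolding mult_mat_vec_def scalar_prod_def using y C i' Suc by (auto simp: bord_def row_def intro!: sum.cong)
    then show ?thesis using L Suc i' b C y by (simp add: bord_def mult.commute)
  qed
qed

lemma bord_kernel_iff:
  fixes C :: "'a :: comm_ring_1 mat"
  assumes b: "b \<in> carrier_vec m" and C: "C \<in> carrier_mat m m" and y: "y \<in> carrier_vec m"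
  shows "bord m a b C *\<^sub>v vCons t y = 0\<^sub>v (Suc m) \<longleftrightarrow> a * t + b \<bullet> y = 0 \<and> t \<cdot>\<^sub>v b + C *\<^sub>v y = 0\<^sub>v m"
proof -
  have "0\<^sub>v (Suc m) = vCons 0 (0\<^sub>v m :: 'a vec)" by (intro eq_vecI) (auto simp: vec_index_vCons)
  then show ?thesis unfolding bord_mult[OF b C y] by simp
qed




lemma bit_add_eq_0: "(x::bit) + y = 0 \<longleftrightarrow> x = y"
  by (cases x; cases y) simp_all

lemma smult_vCons[simp]: "t \<cdot>\<^sub>v vCons a v = vCons (t * a) (t \<cdot>\<^sub>v v)"
  by (intro eq_vecI) (auto simp: vec_index_vCons)

lemma add_vCons[simp]: "dim_vec v = dim_vec w \<Longrightarrow> vCons a v + vCons b w = vCons (a + b) (v + w)"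
  by (intro eq_vecI) (auto simp: vec_index_vCons)

lemma smult_zero_vec_r[simp]: "(a::'a::comm_ring_1) \<cdot>\<^sub>v 0\<^sub>v m = 0\<^sub>v m"
  by (intro eq_vecI) auto

lemma ker_bord:
  fixes C :: "bit mat"
  assumes b: "b \<in> carrier_vec m" and C: "C \<in> carrier_mat m m"
  shows "card (kerM (bord m a b C)) = card {(t,y). y \<in> carrier_vec m \<and> a * t + b \<bullet> y = 0 \<and> t \<cdot>\<^sub>v b + C *\<^sub>v y = 0\<^sub>v m}"
    (is "_ = card ?S")
proof -
  have "kerM (bord m a b C) = (\<lambda>(t,y). vCons t y) ` ?S"
  proof (intro equalityI subsetI)
    fix x assume "x \<in> kerM (bord m a b C)"
    then have x: "x \<in> carrier_vec (Suc m)" and bx: "bord m a b C *\<^sub>v x = 0\<^sub>v (Suc m)"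
      unfolding kerM_def by auto
    have xe: "x = vCons (x $ 0) (vtl x)" using vCons_vtl[OF x] by simp
    have "(x $ 0, vtl x) \<in> ?S" using bx bord_kernel_iff[OF b C vtl_carrier[OF x], of a "x $ 0"] xe x by simp
    then show "x \<in> (\<lambda>(t,y). vCons t y) ` ?S" using xe by (metis (mono_tags, lifting) case_prod_conv image_eqI)
  next
    fix x assume "x \<in> (\<lambda>(t,y). vCons t y) ` ?S"
    then obtain t y where "x = vCons t y" and y: "y \<in> carrier_vec m" and
      c: "a * t + b \<bullet> y = 0" "t \<cdot>\<^sub>v b + C *\<^sub>v y = 0\<^sub>v m" by auto
    then show "x \<in> kerM (bord m a b C)" using bord_kernel_iff[OF b C y] unfolding kerM_def by auto
  qed
  moreover have "inj_on (\<lambda>(t,y). vCons t y) ?S" by (auto simp: inj_on_def)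
  ultimately show ?thesis by (simp add: card_image)
qed

definition outer :: "nat \<Rightarrow> bit vec \<Rightarrow> bit mat" where
  "outer m b = mat m m (\<lambda>(i,j). b $ i * b $ j)"

lemma outer_carrier[simp]: "outer m b \<in> carrier_mat m m" unfolding outer_def by auto
lemma dim_outer[simp]: "dim_row (outer m b) = m" "dim_col (outer m b) = m" unfolding outer_def by auto

lemma outer_mult: assumes b: "b \<in> carrier_vec m" and y: "y \<in> carrier_vec m"
  shows "outer m b *\<^sub>v y = (b \<bullet> y) \<cdot>\<^sub>v b"
proof (rule eq_vecI)
  fix i assume "i < dim_vec ((b \<bullet> y) \<cdot>\<^sub>v b)"
  then have i: "i < m" using b by simp
  have "(outer m b *\<^sub>v y) $ i = (\<Sum>j = 0..<m. b $ i * b $ j * y $ j)"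
    using i y unfolding outer_def mult_mat_vec_def scalar_prod_def by (simp add: row_def)
  also have "\<dots> = b $ i * (\<Sum>j = 0..<m. b $ j * y $ j)" by (simp add: sum_distrib_left mult.left_commute mult.assoc)
  also have "\<dots> = (\<Sum>j = 0..<m. b $ j * y $ j) * b $ i" by (simp add: mult.commute)
  finally show "(outer m b *\<^sub>v y) $ i = ((b \<bullet> y) \<cdot>\<^sub>v b) $ i" using i b y by (simp add: scalar_prod_def)
qed (use b in \<open>auto simp: outer_def\<close>)

lemma ker_case1:
  fixes C :: "bit mat"
  assumes b: "b \<in> carrier_vec m" and C: "C \<in> carrier_mat m m"
  shows "card (kerM (bord m 1 b C)) = card (kerM (C + outer m b))"
proof -
  let ?S = "{(t,y). y \<in> carrier_vec m \<and> 1 * t + b \<bullet> y = 0 \<and> t \<cdot>\<^sub>v b + C *\<^sub>v y = 0\<^sub>v m}"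
  have eq: "(C + outer m b) *\<^sub>v y = t \<cdot>\<^sub>v b + C *\<^sub>v y" if y: "y \<in> carrier_vec m" and t: "t = b \<bullet> y" for y t
    using add_mult_distrib_mat_vec[OF C outer_carrier y] outer_mult[OF b y] t y b C
    by (simp add: comm_add_vec[of _ m])
  have "?S = (\<lambda>y. (b \<bullet> y, y)) ` kerM (C + outer m b)"
  proof (intro equalityI subsetI)
    fix p assume "p \<in> ?S"
    then obtain t y where p: "p = (t, y)" and y: "y \<in> carrier_vec m" and
      c: "t + b \<bullet> y = 0" "t \<cdot>\<^sub>v b + C *\<^sub>v y = 0\<^sub>v m" by auto
    have t: "t = b \<bullet> y" using c(1) bit_add_eq_0 by auto
    have "y \<in> kerM (C + outer m b)" unfolding kerM_def using y C eq[OF y t] c(2) by simp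
    then show "p \<in> (\<lambda>y. (b \<bullet> y, y)) ` kerM (C + outer m b)" using p t by auto
  next
    fix p assume "p \<in> (\<lambda>y. (b \<bullet> y, y)) ` kerM (C + outer m b)"
    then obtain y where p: "p = (b \<bullet> y, y)" and y: "y \<in> kerM (C + outer m b)" by auto
    then have yc: "y \<in> carrier_vec m" and k: "(C + outer m b) *\<^sub>v y = 0\<^sub>v m" using C unfolding kerM_def by auto
    show "p \<in> ?S" using p yc k eq[OF yc refl] by simp
  qed
  moreover have "inj_on (\<lambda>y. (b \<bullet> y, y)) (kerM (C + outer m b))" by (auto simp: inj_on_def)
  ultimately show ?thesis using ker_bord[OF b C, of 1] by (simp add: card_image)
qed

lemma ker_case2:
  fixes C :: "bit mat"
  assumes C: "C \<in> carrier_mat m m"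
  shows "card (kerM (bord m 0 (0\<^sub>v m) C)) = 2 * card (kerM C)"
proof -
  have "{(t,y). y \<in> carrier_vec m \<and> 0 * t + 0\<^sub>v m \<bullet> y = 0 \<and> t \<cdot>\<^sub>v 0\<^sub>v m + C *\<^sub>v y = 0\<^sub>v m} = UNIV \<times> kerM C"
    using C unfolding kerM_def by auto
  then show ?thesis using ker_bord[OF zero_carrier_vec C, of 0]
    by (simp add: card_cartesian_product card_bit_UNIV)
qed




lemma zero_smult_vec_l[simp]: "(0::'a::comm_ring_1) \<cdot>\<^sub>v v = 0\<^sub>v (dim_vec v)"
  by (intro eq_vecI) auto

lemma mult_zero_vec_r[simp]: "A \<in> carrier_mat nr nc \<Longrightarrow> A *\<^sub>v 0\<^sub>v nc = (0\<^sub>v nr :: 'a::comm_ring_1 vec)"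
  by (intro eq_vecI) (auto simp: mult_mat_vec_def scalar_prod_def)

lemma ker_case3:
  fixes E :: "bit mat"
  assumes d: "d \<in> carrier_vec m" and E: "E \<in> carrier_mat m m"
  shows "card (kerM (bord (Suc m) 0 (vCons 1 (0\<^sub>v m)) (bord m c d E))) = card (kerM E)"
proof -
  let ?e = "vCons (1::bit) (0\<^sub>v m)"
  let ?C = "bord m c d E"
  have e: "?e \<in> carrier_vec (Suc m)" by simp
  have C: "?C \<in> carrier_mat (Suc m) (Suc m)" by simp
  let ?S = "{(t,y). y \<in> carrier_vec (Suc m) \<and> 0 * t + ?e \<bullet> y = 0 \<and> t \<cdot>\<^sub>v ?e + ?C *\<^sub>v y = 0\<^sub>v (Suc m)}"
  have char: "(t, vCons s z) \<in> ?S \<longleftrightarrow> s = 0 \<and> t = d \<bullet> z \<and> E *\<^sub>v z = 0\<^sub>v m"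
    if z: "z \<in> carrier_vec m" for t s z
  proof -
    have "?C *\<^sub>v vCons s z = vCons (c * s + d \<bullet> z) (s \<cdot>\<^sub>v d + E *\<^sub>v z)" by (rule bord_mult[OF d E z])
    moreover have "?e \<bullet> vCons s z = s" using z by simp
    moreover have "t \<cdot>\<^sub>v ?e = vCons t (0\<^sub>v m)" by simp
    ultimately have "t \<cdot>\<^sub>v ?e + ?C *\<^sub>v vCons s z = vCons (t + (c * s + d \<bullet> z)) (0\<^sub>v m + (s \<cdot>\<^sub>v d + E *\<^sub>v z))"
      using d E z by simp
    moreover have "0\<^sub>v (Suc m) = vCons (0::bit) (0\<^sub>v m)" by (rule zero_vec_Suc)
    ultimately have "(t, vCons s z) \<in> ?S \<longleftrightarrow> s = 0 \<and> t + (c * s + d \<bullet> z) = 0 \<and> 0\<^sub>v m + (s \<cdot>\<^sub>v d + E *\<^sub>v z) = 0\<^sub>v m"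
      using z by simp
    also have "\<dots> \<longleftrightarrow> s = 0 \<and> t = d \<bullet> z \<and> E *\<^sub>v z = 0\<^sub>v m"
      using d E z by (auto simp: bit_add_eq_0)
    finally show ?thesis .
  qed
  have "?S = (\<lambda>z. (d \<bullet> z, vCons 0 z)) ` kerM E"
  proof (intro equalityI subsetI)
    fix p assume p: "p \<in> ?S"
    obtain t y where pe: "p = (t, y)" by force
    then have y: "y \<in> carrier_vec (Suc m)" using p by auto
    have ye: "y = vCons (y $ 0) (vtl y)" using vCons_vtl[OF y] by simp
    have "(t, vCons (y $ 0) (vtl y)) \<in> ?S" using p pe ye by simp
    then have "y $ 0 = 0 \<and> t = d \<bullet> vtl y \<and> E *\<^sub>v vtl y = 0\<^sub>v m" using char[OF vtl_carrier[OF y]] by blast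
    then show "p \<in> (\<lambda>z. (d \<bullet> z, vCons 0 z)) ` kerM E" using pe ye y E
      unfolding kerM_def by (intro image_eqI[of _ _ "vtl y"]) auto
  next
    fix p assume "p \<in> (\<lambda>z. (d \<bullet> z, vCons 0 z)) ` kerM E"
    then obtain z where p: "p = (d \<bullet> z, vCons 0 z)" and z: "z \<in> carrier_vec m" and Ez: "E *\<^sub>v z = 0\<^sub>v m"
      using E unfolding kerM_def by auto
    have "(d \<bullet> z, vCons 0 z) \<in> ?S" unfolding char[OF z] using Ez by simp
    then show "p \<in> ?S" using p by simp
  qed
  moreover have "inj_on (\<lambda>z. (d \<bullet> z, vCons (0::bit) z)) (kerM E)" by (auto simp: inj_on_def)
  ultimately show ?thesis using ker_bord[OF e C, of 0] by (simp add: card_image)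
qed

lemma ker_case4:
  fixes C U U' :: "bit mat"
  assumes b: "b \<in> carrier_vec m" and C: "C \<in> carrier_mat m m"
    and U: "U \<in> carrier_mat m m" and U': "U' \<in> carrier_mat m m"
    and inv1: "U' * U = 1\<^sub>m m" and inv2: "U * U' = 1\<^sub>m m"
  shows "card (kerM (bord m 0 (U *\<^sub>v b) (U * C * transpose_mat U))) = card (kerM (bord m 0 b C))"
proof -
  let ?S1 = "{(t,y). y \<in> carrier_vec m \<and> 0 * t + b \<bullet> y = 0 \<and> t \<cdot>\<^sub>v b + C *\<^sub>v y = 0\<^sub>v m}"
  let ?S2 = "{(t,y). y \<in> carrier_vec m \<and> 0 * t + (U *\<^sub>v b) \<bullet> y = 0 \<and> t \<cdot>\<^sub>v (U *\<^sub>v b) + (U * C * transpose_mat U) *\<^sub>v y = 0\<^sub>v m}"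
  have UT: "transpose_mat U \<in> carrier_mat m m" using U by simp
  have U'T: "transpose_mat U' \<in> carrier_mat m m" using U' by simp
  have Uinj: "w = 0\<^sub>v m" if w: "w \<in> carrier_vec m" and Uw: "U *\<^sub>v w = 0\<^sub>v m" for w
  proof -
    have "w = (U' * U) *\<^sub>v w" using inv1 w by simp
    also have "\<dots> = U' *\<^sub>v (U *\<^sub>v w)" using U U' w by simp
    also have "\<dots> = 0\<^sub>v m" using Uw U' by simp
    finally show ?thesis .
  qed
  have key: "(t, z) \<in> ?S2 \<longleftrightarrow> (t, transpose_mat U *\<^sub>v z) \<in> ?S1" if z: "z \<in> carrier_vec m" for t z
  proof -
    let ?w = "transpose_mat U *\<^sub>v z"
    have w: "?w \<in> carrier_vec m" using UT z by simp
    have sp: "(U *\<^sub>v b) \<bullet> z = b \<bullet> ?w"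
      using transpose_vec_mult_scalar[OF UT z b] by simp
    have "t \<cdot>\<^sub>v (U *\<^sub>v b) + (U * C * transpose_mat U) *\<^sub>v z = U *\<^sub>v (t \<cdot>\<^sub>v b + C *\<^sub>v ?w)"
    proof -
      have UC: "U * C \<in> carrier_mat m m" using U C by simp
      have "(U * C * transpose_mat U) *\<^sub>v z = (U * C) *\<^sub>v ?w"
        by (rule assoc_mult_mat_vec[OF UC UT z])
      also have "\<dots> = U *\<^sub>v (C *\<^sub>v ?w)"
        by (rule assoc_mult_mat_vec[OF U C w])
      finally have "(U * C * transpose_mat U) *\<^sub>v z = U *\<^sub>v (C *\<^sub>v ?w)" .
      moreover have "U *\<^sub>v (t \<cdot>\<^sub>v b) = t \<cdot>\<^sub>v (U *\<^sub>v b)" using mult_mat_vec[OF U b] .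
      moreover have "U *\<^sub>v (t \<cdot>\<^sub>v b + C *\<^sub>v ?w) = U *\<^sub>v (t \<cdot>\<^sub>v b) + U *\<^sub>v (C *\<^sub>v ?w)"
        using mult_add_distrib_mat_vec[OF U] b C w by simp
      ultimately show ?thesis by simp
    qed
    moreover have "U *\<^sub>v (t \<cdot>\<^sub>v b + C *\<^sub>v ?w) = 0\<^sub>v m \<longleftrightarrow> t \<cdot>\<^sub>v b + C *\<^sub>v ?w = 0\<^sub>v m"
      using Uinj[of "t \<cdot>\<^sub>v b + C *\<^sub>v ?w"] b C w U by auto
    ultimately show ?thesis using sp z w by simp
  qed
  have T1: "transpose_mat U *\<^sub>v (transpose_mat U' *\<^sub>v y) = y" if y: "y \<in> carrier_vec m" for y
  proof -
    have "transpose_mat U * transpose_mat U' = 1\<^sub>m m" using transpose_mult[OF U' U] inv1 by simp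
    then have "(transpose_mat U * transpose_mat U') *\<^sub>v y = y" using y by simp
    then show ?thesis using assoc_mult_mat_vec[OF UT U'T y] by simp
  qed
  have T2: "transpose_mat U' *\<^sub>v (transpose_mat U *\<^sub>v y) = y" if y: "y \<in> carrier_vec m" for y
  proof -
    have "transpose_mat U' * transpose_mat U = 1\<^sub>m m" using transpose_mult[OF U U'] inv2 by simp
    then have "(transpose_mat U' * transpose_mat U) *\<^sub>v y = y" using y by simp
    then show ?thesis using assoc_mult_mat_vec[OF U'T UT y] by simp
  qed
  have "bij_betw (\<lambda>(t,z). (t, transpose_mat U *\<^sub>v z)) ?S2 ?S1"
  proof (rule bij_betw_byWitness[where f' = "\<lambda>(t,y). (t, transpose_mat U' *\<^sub>v y)"])
    show "\<forall>a\<in>?S2. (\<lambda>(t,y). (t, transpose_mat U' *\<^sub>v y)) ((\<lambda>(t,z). (t, transpose_mat U *\<^sub>v z)) a) = a"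
      using T2 by auto
    show "\<forall>a\<in>?S1. (\<lambda>(t,z). (t, transpose_mat U *\<^sub>v z)) ((\<lambda>(t,y). (t, transpose_mat U' *\<^sub>v y)) a) = a"
      using T1 by auto
    show "(\<lambda>(t,z). (t, transpose_mat U *\<^sub>v z)) ` ?S2 \<subseteq> ?S1"
    proof
      fix p assume "p \<in> (\<lambda>(t,z). (t, transpose_mat U *\<^sub>v z)) ` ?S2"
      then obtain t z where p: "p = (t, transpose_mat U *\<^sub>v z)" and tz: "(t,z) \<in> ?S2" by auto
      then have "z \<in> carrier_vec m" by auto
      then show "p \<in> ?S1" using key tz p by blast
    qed
    show "(\<lambda>(t,y). (t, transpose_mat U' *\<^sub>v y)) ` ?S1 \<subseteq> ?S2"
    proof
      fix p assume "p \<in> (\<lambda>(t,y). (t, transpose_mat U' *\<^sub>v y)) ` ?S1"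
      then obtain t y where p: "p = (t, transpose_mat U' *\<^sub>v y)" and ty: "(t,y) \<in> ?S1" by auto
      then have y: "y \<in> carrier_vec m" by auto
      have z: "transpose_mat U' *\<^sub>v y \<in> carrier_vec m" using U'T y by simp
      show "p \<in> ?S2" using key[OF z, of t] T1[OF y] ty p by simp
    qed
  qed
  then have "card ?S2 = card ?S1" by (rule bij_betw_same_card)
  moreover have "U *\<^sub>v b \<in> carrier_vec m" "U * C * transpose_mat U \<in> carrier_mat m m" using U b C UT by auto
  ultimately show ?thesis using ker_bord[OF b C, of 0] ker_bord[of "U *\<^sub>v b" m "U * C * transpose_mat U" 0] by simp
qed




lemma inj_inverse:
  fixes U :: "'a::field mat"
  assumes U: "U \<in> carrier_mat n n"
    and inj: "\<And>x. x \<in> carrier_vec n \<Longrightarrow> U *\<^sub>v x = 0\<^sub>v n \<Longrightarrow> x = 0\<^sub>v n"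
  shows "\<exists>U'. U' \<in> carrier_mat n n \<and> U' * U = 1\<^sub>m n \<and> U * U' = 1\<^sub>m n"
proof -
  have "det U \<noteq> 0" using det_0_iff_vec_prod_zero_field[OF U] inj by auto
  from det_non_zero_imp_unit[OF U this, of "()"]
  show ?thesis unfolding Units_def ring_mat_def by auto
qed

lemma exists_U:
  fixes b :: "bit vec"
  assumes b: "b \<in> carrier_vec (Suc m)" and b0: "b \<noteq> 0\<^sub>v (Suc m)"
  shows "\<exists>U U'. U \<in> carrier_mat (Suc m) (Suc m) \<and> U' \<in> carrier_mat (Suc m) (Suc m) \<and>
     U' * U = 1\<^sub>m (Suc m) \<and> U * U' = 1\<^sub>m (Suc m) \<and> U *\<^sub>v b = vCons 1 (0\<^sub>v m)"
proof -
  obtain j where j: "j < Suc m" and bj: "b $ j = 1"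
  proof -
    have "\<exists>j < Suc m. b $ j \<noteq> 0"
    proof (rule ccontr)
      assume "\<not> ?thesis"
      then have "b = 0\<^sub>v (Suc m)" using b by (intro eq_vecI) auto
      then show False using b0 by simp
    qed
    then show ?thesis using that by auto
  qed
  define \<sigma> where "\<sigma> i = (if i = 0 then j else if i = j then 0 else i)" for i
  have \<sigma>lt: "\<sigma> i < Suc m" if "i < Suc m" for i using that j unfolding \<sigma>_def by auto
  have \<sigma>\<sigma>: "\<sigma> (\<sigma> i) = i" for i unfolding \<sigma>_def by auto
  have \<sigma>0: "\<sigma> i = 0 \<longleftrightarrow> i = j" for i unfolding \<sigma>_def by auto
  define U where "U = mat (Suc m) (Suc m) (\<lambda>(i,k). if i = 0 then (if k = j then 1 else 0)
     else (if k = \<sigma> i then 1 else 0) + (if k = j then b $ \<sigma> i else (0::bit)))"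
  have U: "U \<in> carrier_mat (Suc m) (Suc m)" unfolding U_def by auto
  have Umult: "(U *\<^sub>v x) $ i = (if i = 0 then x $ j else x $ \<sigma> i + b $ \<sigma> i * x $ j)"
    if x: "x \<in> carrier_vec (Suc m)" and i: "i < Suc m" for x i
  proof -
    have "(U *\<^sub>v x) $ i = (\<Sum>k = 0..<Suc m. U $$ (i, k) * x $ k)"
      using i x U unfolding mult_mat_vec_def scalar_prod_def by (simp add: row_def)
    also have "\<dots> = (if i = 0 then x $ j else x $ \<sigma> i + b $ \<sigma> i * x $ j)"
    proof (cases "i = 0")
      case True
      have "(\<Sum>k = 0..<Suc m. U $$ (i, k) * x $ k) = (\<Sum>k = 0..<Suc m. if k = j then x $ k else 0)"
        using True unfolding U_def by (intro sum.cong) auto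
      also have "\<dots> = x $ j" using j by simp
      finally show ?thesis using True by simp
    next
      case False
      have "(\<Sum>k = 0..<Suc m. U $$ (i, k) * x $ k) =
            (\<Sum>k = 0..<Suc m. (if k = \<sigma> i then x $ k else 0) + (if k = j then b $ \<sigma> i * x $ k else 0))"
        using False i unfolding U_def by (intro sum.cong) (auto simp: distrib_right)
      also have "\<dots> = x $ \<sigma> i + b $ \<sigma> i * x $ j" using j \<sigma>lt[OF i] by (simp add: sum.distrib)
      finally show ?thesis using False by simp
    qed
    finally show ?thesis .
  qed
  have inj: "x = 0\<^sub>v (Suc m)" if x: "x \<in> carrier_vec (Suc m)" and Ux: "U *\<^sub>v x = 0\<^sub>v (Suc m)" for x
  proof -
    have xj: "x $ j = 0" using Umult[OF x, of 0] Ux by (metis index_zero_vec(1) zero_less_Suc)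
    have "x $ k = 0" if k: "k < Suc m" for k
    proof (cases "k = j")
      case True then show ?thesis using xj by simp
    next
      case False
      then have "\<sigma> k \<noteq> 0" using \<sigma>0 by simp
      have "(U *\<^sub>v x) $ \<sigma> k = 0" using Ux \<sigma>lt[OF k] by simp
      then show ?thesis using Umult[OF x \<sigma>lt[OF k]] \<open>\<sigma> k \<noteq> 0\<close> xj \<sigma>\<sigma> by simp
    qed
    then show ?thesis using x by (intro eq_vecI) auto
  qed
  obtain U' where U': "U' \<in> carrier_mat (Suc m) (Suc m)" "U' * U = 1\<^sub>m (Suc m)" "U * U' = 1\<^sub>m (Suc m)"
    using inj_inverse[OF U inj] by blast
  have "U *\<^sub>v b = vCons 1 (0\<^sub>v m)"
  proof (rule eq_vecI)
    fix i assume "i < dim_vec (vCons (1::bit) (0\<^sub>v m))"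
    then have i: "i < Suc m" by simp
    show "(U *\<^sub>v b) $ i = vCons 1 (0\<^sub>v m) $ i"
      using Umult[OF b i] bj i by (cases i) auto
  qed (use U in simp)
  then show ?thesis using U U' by blast
qed




definition Sym :: "nat \<Rightarrow> bit mat set" where
  "Sym m = {C. C \<in> carrier_mat m m \<and> transpose_mat C = C}"

definition NK :: "nat \<Rightarrow> nat \<Rightarrow> nat" where
  "NK m d = card {C \<in> Sym m. card (kerM C) = 2 ^ d}"

lemma finite_carrier_mat_bit: "finite (carrier_mat n m :: bit mat set)"
proof -
  have "carrier_mat n m \<subseteq> (\<lambda>f. mat n m f) ` ({..<n} \<times> {..<m} \<rightarrow>\<^sub>E (UNIV :: bit set))"
  proof
    fix A :: "bit mat" assume A: "A \<in> carrier_mat n m"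
    have "A = mat n m (restrict (\<lambda>p. A $$ p) ({..<n} \<times> {..<m}))"
      using A by (intro eq_matI) auto
    moreover have "restrict (\<lambda>p. A $$ p) ({..<n} \<times> {..<m}) \<in> {..<n} \<times> {..<m} \<rightarrow>\<^sub>E UNIV" by auto
    ultimately show "A \<in> (\<lambda>f. mat n m f) ` ({..<n} \<times> {..<m} \<rightarrow>\<^sub>E UNIV)" by blast
  qed
  moreover have "finite ({..<n} \<times> {..<m} \<rightarrow>\<^sub>E (UNIV :: bit set))" by (intro finite_PiE) auto
  ultimately show ?thesis by (meson finite_imageI finite_subset)
qed

lemma finite_Sym[simp]: "finite (Sym m)"
  by (rule finite_subset[OF _ finite_carrier_mat_bit[of m m]]) (auto simp: Sym_def)

lemma finite_Sym_P[simp]: "finite {C \<in> Sym m. P C}" by simp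

lemma Sym_carrier: "C \<in> Sym m \<Longrightarrow> C \<in> carrier_mat m m" by (simp add: Sym_def)

lemma Sym_entry: "C \<in> Sym m \<Longrightarrow> i < m \<Longrightarrow> j < m \<Longrightarrow> C $$ (j, i) = C $$ (i, j)"
  unfolding Sym_def by (metis (mono_tags, lifting) carrier_matD index_transpose_mat(1) mem_Collect_eq)

lemma SymI: "C \<in> carrier_mat m m \<Longrightarrow> (\<And>i j. i < m \<Longrightarrow> j < m \<Longrightarrow> C $$ (j, i) = C $$ (i, j)) \<Longrightarrow> C \<in> Sym m"
  unfolding Sym_def by (auto intro!: eq_matI)

lemma bord_Sym: "b \<in> carrier_vec m \<Longrightarrow> C \<in> Sym m \<Longrightarrow> bord m a b C \<in> Sym (Suc m)"
  by (rule SymI) (auto simp: bord_def Sym_entry)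

lemma bord_inj:
  assumes "bord m a b C = bord m a' b' C'" "b \<in> carrier_vec m" "b' \<in> carrier_vec m"
    "C \<in> carrier_mat m m" "C' \<in> carrier_mat m m"
  shows "a = a' \<and> b = b' \<and> C = C'"
proof -
  have e: "bord m a b C $$ (i, j) = bord m a' b' C' $$ (i, j)" for i j using assms(1) by simp
  have "a = a'" using e[of 0 0] by (simp add: bord_def)
  moreover have "b = b'"
  proof (rule eq_vecI)
    fix i assume "i < dim_vec b'" then have i: "i < m" using assms by simp
    show "b $ i = b' $ i" using e[of 0 "Suc i"] i by (simp add: bord_def)
  qed (use assms in simp)
  moreover have "C = C'"
  proof (rule eq_matI)
    fix i j assume "i < dim_row C'" "j < dim_col C'" then have i: "i < m" "j < m" using assms by auto
    show "C $$ (i, j) = C' $$ (i, j)" using e[of "Suc i" "Suc j"] i by (simp add: bord_def)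
  qed (use assms in auto)
  ultimately show ?thesis by simp
qed

lemma Sym_Suc_decomp:
  assumes A: "A \<in> Sym (Suc m)"
  shows "A = bord m (A $$ (0,0)) (vec m (\<lambda>j. A $$ (0, Suc j))) (mat m m (\<lambda>(i,j). A $$ (Suc i, Suc j)))
    \<and> mat m m (\<lambda>(i,j). A $$ (Suc i, Suc j)) \<in> Sym m"
proof
  have Ac: "A \<in> carrier_mat (Suc m) (Suc m)" using Sym_carrier[OF A] .
  show "A = bord m (A $$ (0,0)) (vec m (\<lambda>j. A $$ (0, Suc j))) (mat m m (\<lambda>(i,j). A $$ (Suc i, Suc j)))"
  proof (rule eq_matI)
    fix i j assume ij: "i < dim_row (bord m (A $$ (0,0)) (vec m (\<lambda>j. A $$ (0, Suc j))) (mat m m (\<lambda>(i,j). A $$ (Suc i, Suc j))))"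
       "j < dim_col (bord m (A $$ (0,0)) (vec m (\<lambda>j. A $$ (0, Suc j))) (mat m m (\<lambda>(i,j). A $$ (Suc i, Suc j))))"
    then have i: "i < Suc m" "j < Suc m" by auto
    show "A $$ (i, j) = bord m (A $$ (0,0)) (vec m (\<lambda>j. A $$ (0, Suc j))) (mat m m (\<lambda>(i,j). A $$ (Suc i, Suc j))) $$ (i, j)"
      using i Sym_entry[OF A, of 0 i] by (cases i; cases j) (auto simp: bord_def)
  qed (use Ac in auto)
  show "mat m m (\<lambda>(i,j). A $$ (Suc i, Suc j)) \<in> Sym m"
    by (rule SymI) (auto simp: Sym_entry[OF A])
qed

lemma Sym_Suc_card:
  "card {A \<in> Sym (Suc m). P A} = card {(a,b,C). b \<in> carrier_vec m \<and> C \<in> Sym m \<and> P (bord m a b C)}"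
    (is "card ?L = card ?R")
proof -
  have "?L = (\<lambda>(a,b,C). bord m a b C) ` ?R"
  proof (intro equalityI subsetI)
    fix A assume "A \<in> ?L"
    then have A: "A \<in> Sym (Suc m)" and P: "P A" by auto
    note D = Sym_Suc_decomp[OF A]
    show "A \<in> (\<lambda>(a,b,C). bord m a b C) ` ?R"
      by (rule image_eqI[of _ _ "(A $$ (0,0), vec m (\<lambda>j. A $$ (0, Suc j)), mat m m (\<lambda>(i,j). A $$ (Suc i, Suc j)))"])
        (use D P in auto)
  next
    fix A assume "A \<in> (\<lambda>(a,b,C). bord m a b C) ` ?R"
    then show "A \<in> ?L" using bord_Sym by auto
  qed
  moreover have "inj_on (\<lambda>(a,b,C). bord m a b C) ?R"
    by (auto simp: inj_on_def dest!: bord_inj intro: Sym_carrier)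
  ultimately show ?thesis by (simp add: card_image)
qed




definition G :: "nat \<Rightarrow> nat \<Rightarrow> bit \<Rightarrow> bit vec \<Rightarrow> bit mat set" where
  "G m d a b = {C \<in> Sym m. card (kerM (bord m a b C)) = 2 ^ d}"

lemma finite_G[simp]: "finite (G m d a b)" unfolding G_def by simp

lemma UNIV_bit: "(UNIV :: bit set) = {0, 1}" by (auto intro: bit.exhaust)

lemma NK_Suc_sum: "NK (Suc m) d = (\<Sum>b\<in>carrier_vec m. card (G m d 0 b)) + (\<Sum>b\<in>carrier_vec m. card (G m d 1 b))"
proof -
  have "NK (Suc m) d = card {(a,b,C). b \<in> carrier_vec m \<and> C \<in> Sym m \<and> card (kerM (bord m a b C)) = 2 ^ d}"
    unfolding NK_def by (rule Sym_Suc_card)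
  also have "{(a,b,C). b \<in> carrier_vec m \<and> C \<in> Sym m \<and> card (kerM (bord m a b C)) = 2 ^ d}
     = Sigma UNIV (\<lambda>a. Sigma (carrier_vec m) (\<lambda>b. G m d a b))"
    unfolding G_def by auto
  also have "card \<dots> = (\<Sum>a\<in>UNIV. card (Sigma (carrier_vec m) (\<lambda>b. G m d a b)))"
    by (rule card_SigmaI) (auto intro: finite_SigmaI)
  also have "\<dots> = (\<Sum>a\<in>UNIV. \<Sum>b\<in>carrier_vec m. card (G m d a b))"
    by (intro sum.cong refl card_SigmaI) auto
  also have "\<dots> = (\<Sum>b\<in>carrier_vec m. card (G m d 0 b)) + (\<Sum>b\<in>carrier_vec m. card (G m d 1 b))"
    unfolding UNIV_bit by simp
  finally show ?thesis .
qed

lemma outer_Sym: "outer m b \<in> Sym m"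
  by (rule SymI) (auto simp: outer_def mult.commute)

lemma G1: assumes b: "b \<in> carrier_vec m" shows "card (G m d 1 b) = NK m d"
proof -
  let ?f = "\<lambda>C. C + outer m b"
  have G: "G m d 1 b = {C \<in> Sym m. card (kerM (C + outer m b)) = 2 ^ d}"
    unfolding G_def using ker_case1[OF b] Sym_carrier by auto
  have fS: "?f C \<in> Sym m" if "C \<in> Sym m" for C
    using that outer_Sym[of m b] by (intro SymI) (auto simp: Sym_carrier Sym_entry)
  have ff: "?f (?f C) = C" if "C \<in> Sym m" for C
    using Sym_carrier[OF that] by (intro eq_matI) (auto simp: add.assoc)
  have "bij_betw ?f (G m d 1 b) {C \<in> Sym m. card (kerM C) = 2 ^ d}"
    by (rule bij_betw_byWitness[where f' = ?f]) (auto simp: G fS ff)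
  then show ?thesis unfolding NK_def by (rule bij_betw_same_card)
qed

lemma G0zero: "card (G m d 0 (0\<^sub>v m)) = (if d = 0 then 0 else NK m (d - 1))"
proof -
  have G: "G m d 0 (0\<^sub>v m) = {C \<in> Sym m. 2 * card (kerM C) = 2 ^ d}"
    unfolding G_def using ker_case2 Sym_carrier by auto
  show ?thesis
  proof (cases d)
    case 0
    then have "G m d 0 (0\<^sub>v m) = {}" unfolding G by auto
    then show ?thesis using 0 by simp
  next
    case (Suc d')
    then have "G m d 0 (0\<^sub>v m) = {C \<in> Sym m. card (kerM C) = 2 ^ d'}" unfolding G by auto
    then show ?thesis using Suc by (simp add: NK_def)
  qed
qed

lemma Ge: "card (G (Suc m) d 0 (vCons 1 (0\<^sub>v m))) = 2 * 2 ^ m * NK m d"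
proof -
  have "card (G (Suc m) d 0 (vCons 1 (0\<^sub>v m))) =
     card {(c,d',E). d' \<in> carrier_vec m \<and> E \<in> Sym m \<and> card (kerM (bord (Suc m) 0 (vCons 1 (0\<^sub>v m)) (bord m c d' E))) = 2 ^ d}"
    unfolding G_def by (rule Sym_Suc_card)
  also have "{(c,d',E). d' \<in> carrier_vec m \<and> E \<in> Sym m \<and> card (kerM (bord (Suc m) 0 (vCons 1 (0\<^sub>v m)) (bord m c d' E))) = 2 ^ d}
     = UNIV \<times> carrier_vec m \<times> {E \<in> Sym m. card (kerM E) = 2 ^ d}"
    using ker_case3 Sym_carrier by auto
  also have "card \<dots> = 2 * 2 ^ m * NK m d"
    by (simp add: card_cartesian_product card_bit_UNIV card_carrier_vec_bit NK_def)
  finally show ?thesis .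
qed

lemma Sym_congr:
  assumes C: "C \<in> Sym m" and U: "U \<in> carrier_mat m m"
  shows "U * C * transpose_mat U \<in> Sym m"
proof -
  have Cc: "C \<in> carrier_mat m m" using Sym_carrier[OF C] .
  have CT: "transpose_mat C = C" using C by (simp add: Sym_def)
  have UC: "U * C \<in> carrier_mat m m" using U Cc by simp
  have "transpose_mat (U * C * transpose_mat U) = transpose_mat (transpose_mat U) * transpose_mat (U * C)"
    by (rule transpose_mult[OF UC]) (use U in simp)
  also have "transpose_mat (U * C) = transpose_mat C * transpose_mat U" by (rule transpose_mult[OF U Cc])
  also have "transpose_mat (transpose_mat U) * (transpose_mat C * transpose_mat U) = U * C * transpose_mat U"
    using CT U Cc by (simp add: assoc_mult_mat[of U m m C m "transpose_mat U" m])
  finally show ?thesis using U Cc unfolding Sym_def by simp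
qed

lemma congr_cancel:
  fixes C U U' :: "bit mat"
  assumes C: "C \<in> carrier_mat m m" and U: "U \<in> carrier_mat m m" and U': "U' \<in> carrier_mat m m"
    and inv: "U' * U = 1\<^sub>m m"
  shows "U' * (U * C * transpose_mat U) * transpose_mat U' = C"
proof -
  have UT: "transpose_mat U \<in> carrier_mat m m" and U'T: "transpose_mat U' \<in> carrier_mat m m" using U U' by auto
  have inv': "transpose_mat U * transpose_mat U' = 1\<^sub>m m" using transpose_mult[OF U' U] inv by simp
  have "U' * (U * C * transpose_mat U) = (U' * U) * C * transpose_mat U"
    using U U' C UT by (simp add: assoc_mult_mat[of U' m m U m C m] assoc_mult_mat[of U' m m "U * C" m "transpose_mat U" m])
  also have "\<dots> = C * transpose_mat U" using inv C UT by simp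
  finally have "U' * (U * C * transpose_mat U) * transpose_mat U' = C * transpose_mat U * transpose_mat U'" by simp
  also have "\<dots> = C * (transpose_mat U * transpose_mat U')" using C UT U'T by simp
  also have "\<dots> = C" using inv' C by simp
  finally show ?thesis .
qed

lemma Gb:
  assumes b: "b \<in> carrier_vec (Suc m)" and b0: "b \<noteq> 0\<^sub>v (Suc m)"
  shows "card (G (Suc m) d 0 b) = card (G (Suc m) d 0 (vCons 1 (0\<^sub>v m)))"
proof -
  obtain U U' where U: "U \<in> carrier_mat (Suc m) (Suc m)" and U': "U' \<in> carrier_mat (Suc m) (Suc m)"
    and inv1: "U' * U = 1\<^sub>m (Suc m)" and inv2: "U * U' = 1\<^sub>m (Suc m)" and Ub: "U *\<^sub>v b = vCons 1 (0\<^sub>v m)"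
    using exists_U[OF b b0] by blast
  let ?f = "\<lambda>C. U * C * transpose_mat U"
  let ?g = "\<lambda>C. U' * C * transpose_mat U'"
  have kf: "card (kerM (bord (Suc m) 0 (vCons 1 (0\<^sub>v m)) (?f C))) = card (kerM (bord (Suc m) 0 b C))"
    if "C \<in> Sym (Suc m)" for C
    using ker_case4[OF b Sym_carrier[OF that] U U' inv1 inv2] Ub by simp
  have "bij_betw ?f (G (Suc m) d 0 b) (G (Suc m) d 0 (vCons 1 (0\<^sub>v m)))"
  proof (rule bij_betw_byWitness[where f' = ?g])
    show "\<forall>C\<in>G (Suc m) d 0 b. ?g (?f C) = C"
      using congr_cancel[OF _ U U' inv1] Sym_carrier by (auto simp: G_def)
    show "\<forall>C\<in>G (Suc m) d 0 (vCons 1 (0\<^sub>v m)). ?f (?g C) = C"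
      using congr_cancel[OF _ U' U inv2] Sym_carrier by (auto simp: G_def)
    show "?f ` G (Suc m) d 0 b \<subseteq> G (Suc m) d 0 (vCons 1 (0\<^sub>v m))"
      using kf Sym_congr[OF _ U] by (auto simp: G_def)
    show "?g ` G (Suc m) d 0 (vCons 1 (0\<^sub>v m)) \<subseteq> G (Suc m) d 0 b"
    proof
      fix C assume "C \<in> ?g ` G (Suc m) d 0 (vCons 1 (0\<^sub>v m))"
      then obtain C' where C: "C = ?g C'" and C': "C' \<in> G (Suc m) d 0 (vCons 1 (0\<^sub>v m))" by auto
      have C'S: "C' \<in> Sym (Suc m)" using C' by (simp add: G_def)
      have CS: "C \<in> Sym (Suc m)" using Sym_congr[OF C'S U'] C by simp
      have "?f C = C'" using C congr_cancel[OF Sym_carrier[OF C'S] U' U inv2] by simp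
      then show "C \<in> G (Suc m) d 0 b" using kf[OF CS] C' CS by (simp add: G_def)
    qed
  qed
  then show ?thesis by (rule bij_betw_same_card)
qed




lemma carrier_vec_0: "carrier_vec 0 = {0\<^sub>v 0}"
  by (auto intro!: eq_vecI)

lemma NK_0: "NK 0 d = (if d = 0 then 1 else 0)"
proof -
  have S: "Sym 0 = {1\<^sub>m 0}" unfolding Sym_def by (auto intro!: eq_matI)
  have K: "kerM (1\<^sub>m 0 :: bit mat) = {0\<^sub>v 0}" unfolding kerM_def by (auto intro!: eq_vecI)
  have "{C \<in> {1\<^sub>m 0 :: bit mat}. card (kerM C) = 2 ^ d} = (if d = 0 then {1\<^sub>m 0} else {})"
    using K one_less_power[of "2::nat" d] by auto
  then show ?thesis unfolding NK_def S by simp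
qed

lemma NK_1: "NK (Suc 0) d = NK 0 d + (if d = 0 then 0 else NK 0 (d - 1))"
  using NK_Suc_sum[of 0 d] G0zero[of 0 d] G1[of "0\<^sub>v 0" 0 d] unfolding carrier_vec_0 by simp

lemma NK_SS: "NK (Suc (Suc m)) d = 2 ^ Suc m * NK (Suc m) d + (if d = 0 then 0 else NK (Suc m) (d - 1))
   + (2 ^ Suc m - 1) * (2 * 2 ^ m * NK m d)"
proof -
  have fin: "finite (carrier_vec (Suc m) :: bit vec set)" by simp
  have z: "0\<^sub>v (Suc m) \<in> (carrier_vec (Suc m) :: bit vec set)" by simp
  have "(\<Sum>b\<in>carrier_vec (Suc m). card (G (Suc m) d 0 b)) =
     card (G (Suc m) d 0 (0\<^sub>v (Suc m))) + (\<Sum>b\<in>carrier_vec (Suc m) - {0\<^sub>v (Suc m)}. card (G (Suc m) d 0 b))"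
    using sum.remove[OF fin z] by simp
  also have "(\<Sum>b\<in>carrier_vec (Suc m) - {0\<^sub>v (Suc m)}. card (G (Suc m) d 0 b)) =
      (\<Sum>b\<in>(carrier_vec (Suc m) :: bit vec set) - {0\<^sub>v (Suc m)}. 2 * 2 ^ m * NK m d)"
  proof (intro sum.cong refl)
    fix b :: "bit vec" assume "b \<in> carrier_vec (Suc m) - {0\<^sub>v (Suc m)}"
    then show "card (G (Suc m) d 0 b) = 2 * 2 ^ m * NK m d" using Gb[of b m d] Ge[of m d] by auto
  qed
  also have "\<dots> = (2 ^ Suc m - 1) * (2 * 2 ^ m * NK m d)"
    using card_carrier_vec_bit[of "Suc m"] by (simp add: card_Diff_singleton)
  finally have A: "(\<Sum>b\<in>carrier_vec (Suc m). card (G (Suc m) d 0 b)) =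
     (if d = 0 then 0 else NK (Suc m) (d - 1)) + (2 ^ Suc m - 1) * (2 * 2 ^ m * NK m d)"
    using G0zero by simp
  have B: "(\<Sum>b\<in>carrier_vec (Suc m). card (G (Suc m) d 1 b)) = 2 ^ Suc m * NK (Suc m) d"
    using card_carrier_vec_bit[of "Suc m"] by (simp add: G1)
  show ?thesis using NK_Suc_sum[of "Suc m" d] A B by simp
qed

definition ones :: "nat \<Rightarrow> bit vec" where "ones n = vec n (\<lambda>_. 1)"

lemma ones_carrier[simp]: "ones n \<in> carrier_vec n" unfolding ones_def by simp
lemma dim_ones[simp]: "dim_vec (ones n) = n" unfolding ones_def by simp
lemma index_ones[simp]: "i < n \<Longrightarrow> ones n $ i = 1" unfolding ones_def by simp

lemma ker_case5:
  assumes BS: "B \<in> Sym n"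
  shows "card (kerM (bord n (ones n \<bullet> (B *\<^sub>v ones n)) (B *\<^sub>v ones n) B)) = 2 * card (kerM B)"
proof -
  let ?o = "ones n"
  let ?c = "B *\<^sub>v ?o"
  let ?a = "?o \<bullet> ?c"
  have B: "B \<in> carrier_mat n n" using Sym_carrier[OF BS] .
  have BT: "transpose_mat B = B" using BS by (simp add: Sym_def)
  have c: "?c \<in> carrier_vec n" using B by simp
  let ?S = "{(t,y). y \<in> carrier_vec n \<and> ?a * t + ?c \<bullet> y = 0 \<and> t \<cdot>\<^sub>v ?c + B *\<^sub>v y = 0\<^sub>v n}"
  have char: "(t, y) \<in> ?S \<longleftrightarrow> B *\<^sub>v (y + t \<cdot>\<^sub>v ?o) = 0\<^sub>v n" if y: "y \<in> carrier_vec n" for t y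
  proof -
    have w: "y + t \<cdot>\<^sub>v ?o \<in> carrier_vec n" using y by simp
    have i: "B *\<^sub>v (y + t \<cdot>\<^sub>v ?o) = t \<cdot>\<^sub>v ?c + B *\<^sub>v y"
    proof -
      have "B *\<^sub>v (y + t \<cdot>\<^sub>v ?o) = B *\<^sub>v y + B *\<^sub>v (t \<cdot>\<^sub>v ?o)"
        using mult_add_distrib_mat_vec[OF B y] by simp
      also have "B *\<^sub>v (t \<cdot>\<^sub>v ?o) = t \<cdot>\<^sub>v ?c" using mult_mat_vec[OF B ones_carrier] .
      finally show ?thesis using y c B by (simp add: comm_add_vec[of _ n])
    qed
    have ii: "?c \<bullet> (y + t \<cdot>\<^sub>v ?o) = ?a * t + ?c \<bullet> y"
    proof -
      have "?c \<bullet> (y + t \<cdot>\<^sub>v ?o) = ?c \<bullet> y + ?c \<bullet> (t \<cdot>\<^sub>v ?o)"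
        using scalar_prod_add_distrib[OF c y] by simp
      also have "?c \<bullet> (t \<cdot>\<^sub>v ?o) = t * (?c \<bullet> ?o)" using c by simp
      also have "?c \<bullet> ?o = ?a" using comm_scalar_prod[OF c ones_carrier] .
      finally show ?thesis by (simp add: ac_simps)
    qed
    have iii: "?c \<bullet> (y + t \<cdot>\<^sub>v ?o) = ?o \<bullet> (B *\<^sub>v (y + t \<cdot>\<^sub>v ?o))"
      using transpose_vec_mult_scalar[OF B w ones_carrier] BT by simp
    show ?thesis
    proof
      assume "(t, y) \<in> ?S"
      then show "B *\<^sub>v (y + t \<cdot>\<^sub>v ?o) = 0\<^sub>v n" using i by simp
    next
      assume h: "B *\<^sub>v (y + t \<cdot>\<^sub>v ?o) = 0\<^sub>v n"
      then have "?a * t + ?c \<bullet> y = 0" using ii iii by simp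
      then show "(t, y) \<in> ?S" using h i y by simp
    qed
  qed
  have inv: "(y + t \<cdot>\<^sub>v ?o) + t \<cdot>\<^sub>v ?o = y" if "y \<in> carrier_vec n" for y t
    using that by (intro eq_vecI) (auto simp: add.assoc)
  have "bij_betw (\<lambda>(t,w). (t, w + t \<cdot>\<^sub>v ?o)) ((UNIV :: bit set) \<times> kerM B) ?S"
  proof (rule bij_betw_byWitness[where f' = "\<lambda>(t,y). (t, y + t \<cdot>\<^sub>v ?o)"])
    show "\<forall>a\<in>UNIV \<times> kerM B. (\<lambda>(t,y). (t, y + t \<cdot>\<^sub>v ?o)) ((\<lambda>(t,w). (t, w + t \<cdot>\<^sub>v ?o)) a) = a"
      using inv B by (auto simp: kerM_def)
    show "\<forall>a\<in>?S. (\<lambda>(t,w). (t, w + t \<cdot>\<^sub>v ?o)) ((\<lambda>(t,y). (t, y + t \<cdot>\<^sub>v ?o)) a) = a"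
      using inv by auto
    show "(\<lambda>(t,w). (t, w + t \<cdot>\<^sub>v ?o)) ` (UNIV \<times> kerM B) \<subseteq> ?S"
    proof
      fix p assume "p \<in> (\<lambda>(t,w). (t, w + t \<cdot>\<^sub>v ?o)) ` (UNIV \<times> kerM B)"
      then obtain t w where p: "p = (t, w + t \<cdot>\<^sub>v ?o)" and w: "w \<in> carrier_vec n" and Bw: "B *\<^sub>v w = 0\<^sub>v n"
        using B by (auto simp: kerM_def)
      have y: "w + t \<cdot>\<^sub>v ?o \<in> carrier_vec n" using w by simp
      show "p \<in> ?S" unfolding p using char[OF y] inv[OF w] Bw by simp
    qed
    show "(\<lambda>(t,y). (t, y + t \<cdot>\<^sub>v ?o)) ` ?S \<subseteq> UNIV \<times> kerM B"
    proof
      fix p assume "p \<in> (\<lambda>(t,y). (t, y + t \<cdot>\<^sub>v ?o)) ` ?S"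
      then obtain t y where p: "p = (t, y + t \<cdot>\<^sub>v ?o)" and ty: "(t, y) \<in> ?S" by auto
      then have y: "y \<in> carrier_vec n" by auto
      show "p \<in> UNIV \<times> kerM B" using char[OF y] ty p y B by (auto simp: kerM_def)
    qed
  qed
  then have "card ((UNIV :: bit set) \<times> kerM B) = card ?S" by (rule bij_betw_same_card)
  then show ?thesis using ker_bord[OF c B, of ?a]
    by (simp add: card_cartesian_product card_bit_UNIV)
qed




lemma real_pow_minus1: "real (2 ^ k - 1 :: nat) = 2 ^ k - 1"
  by (simp add: of_nat_diff)

lemma NK_rec0_real: "real (NK (Suc (Suc m)) 0) = 2 ^ Suc m * real (NK (Suc m) 0) + (2 ^ Suc m - 1) * (2 * 2 ^ m * real (NK m 0))"
  using NK_SS[of m 0] real_pow_minus1[of "Suc m"] by (simp del: power_Suc)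

lemma NK_rec1_real: "real (NK (Suc (Suc m)) 1) = 2 ^ Suc m * real (NK (Suc m) 1) + real (NK (Suc m) 0) + (2 ^ Suc m - 1) * (2 * 2 ^ m * real (NK m 1))"
  using NK_SS[of m 1] real_pow_minus1[of "Suc m"] by (simp del: power_Suc)

lemma NK_small: "NK 0 0 = 1" "NK 0 1 = 0" "NK (Suc 0) 0 = 1" "NK (Suc 0) 1 = 1"
  using NK_0 NK_1 by auto

lemma J_formula: "real (NK (Suc m) 1) = (2 ^ Suc m - 1) * real (NK m 0)"
proof -
  have "real (NK (Suc m) 1) = (2 ^ Suc m - 1) * real (NK m 0) \<and>
        real (NK (Suc (Suc m)) 1) = (2 ^ Suc (Suc m) - 1) * real (NK (Suc m) 0)"
  proof (induction m)
    case 0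
    have "real (NK (Suc (Suc 0)) 1) = 3" using NK_rec1_real[of 0] NK_small by simp
    then show ?case using NK_small by simp
  next
    case (Suc m)
    define x :: real where "x = 2 ^ Suc m"
    have J1: "real (NK (Suc m) 1) = (x - 1) * real (NK m 0)" using Suc.IH x_def by simp
    have J2: "real (NK (Suc (Suc m)) 1) = (2 * x - 1) * real (NK (Suc m) 0)" using Suc.IH x_def by simp
    have I2: "real (NK (Suc (Suc m)) 0) = x * real (NK (Suc m) 0) + (x - 1) * (x * real (NK m 0))"
      using NK_rec0_real[of m] x_def by simp
    have J3: "real (NK (Suc (Suc (Suc m))) 1) = 2 * x * real (NK (Suc (Suc m)) 1) + real (NK (Suc (Suc m)) 0)
        + (2 * x - 1) * (2 * x * real (NK (Suc m) 1))"
      using NK_rec1_real[of "Suc m"] x_def by simp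
    have "real (NK (Suc (Suc (Suc m))) 1) = (4 * x - 1) * real (NK (Suc (Suc m)) 0)"
      unfolding J3 J2 J1 I2 by (simp add: algebra_simps)
    moreover have "(2::real) ^ Suc (Suc (Suc m)) = 4 * x" using x_def by simp
    ultimately show ?case using Suc.IH by simp
  qed
  then show ?thesis by simp
qed

lemma u_Suc_even: "even n \<Longrightarrow> u (Suc n) = u n"
  unfolding u_def by (simp add: even_iff_mod_2_eq_zero)

lemma two_powr_neg: "(2::real) powr (- real n) = 1 / 2 ^ n"
  by (simp add: powr_minus powr_realpow divide_inverse)

lemma u_Suc_odd: assumes "odd n" shows "u (Suc n) = u n * (1 - 1 / 2 ^ n)"
proof -
  obtain p where n: "n = 2 * p + 1" using assms oddE by blast
  have d: "Suc n div 2 = Suc p" "n div 2 = p" using n by auto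
  have e: "1 - 2 * real (Suc p) = - real n" using n by simp
  have "u (Suc n) = (\<Prod>i = 1..Suc p. 1 - 2 powr (1 - 2 * real i))" unfolding u_def d ..
  also have "\<dots> = u n * (1 - 2 powr (1 - 2 * real (Suc p)))"
    unfolding u_def d by (simp add: prod.cl_ivl_Suc)
  also have "\<dots> = u n * (1 - 1 / 2 ^ n)" unfolding e two_powr_neg ..
  finally show ?thesis .
qed

lemma choose2_Suc: "Suc n choose 2 = (n choose 2) + n"
  by (simp add: numeral_2_eq_2)

lemma I_formula: "real (NK m 0) = 2 ^ (Suc m choose 2) * u (Suc m)"
proof -
  have "real (NK m 0) = 2 ^ (Suc m choose 2) * u (Suc m) \<and>
        real (NK (Suc m) 0) = 2 ^ (Suc (Suc m) choose 2) * u (Suc (Suc m))"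
  proof (induction m)
    case 0
    have u1: "u 1 = 1" unfolding u_def by simp
    have u2: "u 2 = 1 / 2" using u_Suc_odd[of 1] u1 by (simp add: numeral_2_eq_2)
    show ?case using NK_small u1 u2 by (simp add: numeral_2_eq_2)
  next
    case (Suc m)
    define x :: real where "x = 2 ^ Suc m"
    have xpos: "x > 0" unfolding x_def by simp
    define c where "c = Suc m choose 2"
    define P :: real where "P = 2 ^ c"
    have c2: "Suc (Suc m) choose 2 = c + Suc m" unfolding c_def by (rule choose2_Suc)
    have c3: "Suc (Suc (Suc m)) choose 2 = c + Suc m + Suc (Suc m)" using choose2_Suc c2 by simp
    have p2: "(2::real) ^ (Suc (Suc m) choose 2) = P * x" unfolding c2 P_def x_def by (simp add: power_add)
    have p3: "(2::real) ^ (Suc (Suc (Suc m)) choose 2) = P * x * (2 * x)"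
      unfolding c3 P_def x_def by (simp add: power_add)
    let ?u1 = "u (Suc m)" let ?u2 = "u (Suc (Suc m))" let ?u3 = "u (Suc (Suc (Suc m)))"
    have key: "2 * x * x * ?u3 = x * x * ?u2 + (x - 1) * x * ?u1"
    proof (cases "even m")
      case True
      have "odd (Suc m)" using True by simp
      then have u2: "?u2 = ?u1 * (1 - 1 / x)" using u_Suc_odd x_def by simp
      have u3: "?u3 = ?u2" using True by (simp add: u_Suc_even)
      have B: "x * ?u2 = (x - 1) * ?u1"
      proof -
        have "x * ?u2 = x * (?u1 * (1 - 1 / x))" using u2 by simp
        also have "\<dots> = (x - 1) * ?u1" using xpos by (simp add: field_simps)
        finally show ?thesis .
      qed
      have A: "x * x * ?u2 = x * (x - 1) * ?u1" using B by (metis mult.assoc)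
      have "2 * x * x * ?u3 = x * x * ?u2 + x * x * ?u2" using u3 by simp
      also have "\<dots> = x * x * ?u2 + (x - 1) * x * ?u1" using A by simp
      finally show ?thesis .
    next
      case False
      have u2: "?u2 = ?u1" using False by (simp add: u_Suc_even)
      have u3: "?u3 = ?u1 * (1 - 1 / (2 * x))" using False u_Suc_odd[of "Suc (Suc m)"] x_def u2 by simp
      have B: "2 * x * ?u3 = (2 * x - 1) * ?u1"
      proof -
        have "2 * x * ?u3 = 2 * x * (?u1 * (1 - 1 / (2 * x)))" using u3 by simp
        also have "\<dots> = (2 * x - 1) * ?u1" using xpos by (simp add: field_simps)
        finally show ?thesis .
      qed
      have "2 * x * x * ?u3 = x * (2 * x * ?u3)" by (simp add: ac_simps)
      also have "\<dots> = x * ((2 * x - 1) * ?u1)" using B by simp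
      also have "\<dots> = x * x * ?u2 + (x - 1) * x * ?u1" using u2 by (simp add: algebra_simps)
      finally show ?thesis .
    qed
    have I0: "real (NK m 0) = P * ?u1" using Suc.IH P_def c_def by simp
    have I1: "real (NK (Suc m) 0) = P * x * ?u2" using Suc.IH p2 by simp
    have "real (NK (Suc (Suc m)) 0) = x * real (NK (Suc m) 0) + (x - 1) * (x * real (NK m 0))"
      using NK_rec0_real[of m] x_def by simp
    also have "\<dots> = P * (x * x * ?u2 + (x - 1) * x * ?u1)" unfolding I0 I1 by (simp add: algebra_simps)
    also have "\<dots> = P * (2 * x * x * ?u3)" by (simp only: key)
    also have "\<dots> = P * x * (2 * x) * ?u3" by (simp add: ac_simps)
    finally show ?case using Suc.IH p3 by simp
  qed
  then show ?thesis by simp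
qed




lemma mult_ones: "C \<in> carrier_mat n n \<Longrightarrow> i < n \<Longrightarrow> (C *\<^sub>v ones n) $ i = (\<Sum>j<n. C $$ (i, j))"
  by (simp add: mult_mat_vec_def scalar_prod_def atLeast0LessThan row_def)

lemma ones_scalar: "v \<in> carrier_vec n \<Longrightarrow> ones n \<bullet> v = (\<Sum>j<n. v $ j)"
  by (simp add: scalar_prod_def atLeast0LessThan)

lemma rowsum_bord:
  assumes i: "i < Suc n" and b: "b \<in> carrier_vec n" and C: "C \<in> carrier_mat n n"
  shows "(\<Sum>j<Suc n. bord n a b C $$ (i, j)) =
    (if i = 0 then a + (\<Sum>j<n. b $ j) else b $ (i - 1) + (\<Sum>j<n. C $$ (i - 1, j)))"
proof -
  have "(\<Sum>j<Suc n. bord n a b C $$ (i, j)) = bord n a b C $$ (i, 0) + (\<Sum>j<n. bord n a b C $$ (i, Suc j))"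
    by (rule sum.lessThan_Suc_shift)
  also have "(\<Sum>j<n. bord n a b C $$ (i, Suc j)) = (if i = 0 then (\<Sum>j<n. b $ j) else (\<Sum>j<n. C $$ (i - 1, j)))"
    using i by (auto simp: bord_def intro!: sum.cong)
  finally show ?thesis using i by (simp add: bord_def)
qed

lemma main_set_card:
  "card {A :: bit mat. A \<in> carrier_mat (Suc n) (Suc n) \<and> transpose_mat A = A
      \<and> (\<forall>i<Suc n. (\<Sum>j<Suc n. A $$ (i, j)) = 0) \<and> card (kerM A) = 4} = NK n 1"
    (is "card ?L = _")
proof -
  define f where "f B = bord n (ones n \<bullet> (B *\<^sub>v ones n)) (B *\<^sub>v ones n) B" for B
  have "?L = f ` {B \<in> Sym n. card (kerM B) = 2}"
  proof (intro equalityI subsetI)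
    fix A assume "A \<in> ?L"
    then have Ac: "A \<in> carrier_mat (Suc n) (Suc n)" and AT: "transpose_mat A = A"
      and rs: "\<forall>i<Suc n. (\<Sum>j<Suc n. A $$ (i, j)) = 0" and k4: "card (kerM A) = 4" by auto
    have AS: "A \<in> Sym (Suc n)" using Ac AT by (simp add: Sym_def)
    define a where "a = A $$ (0,0)"
    define b where "b = vec n (\<lambda>j. A $$ (0, Suc j))"
    define C where "C = mat n n (\<lambda>(i,j). A $$ (Suc i, Suc j))"
    have AE: "A = bord n a b C" and CS: "C \<in> Sym n"
      using Sym_Suc_decomp[OF AS] unfolding a_def b_def C_def by auto
    have b: "b \<in> carrier_vec n" unfolding b_def by simp
    have Cc: "C \<in> carrier_mat n n" using Sym_carrier[OF CS] .
    have bC: "b = C *\<^sub>v ones n"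
    proof (rule eq_vecI)
      fix i assume "i < dim_vec (C *\<^sub>v ones n)" then have i: "i < n" using Cc by simp
      have "(\<Sum>j<Suc n. A $$ (Suc i, j)) = 0" using rs i by simp
      then have "b $ i + (\<Sum>j<n. C $$ (i, j)) = 0" using rowsum_bord[of "Suc i" n b C a] i b Cc AE by simp
      then show "b $ i = (C *\<^sub>v ones n) $ i" using mult_ones[OF Cc i] bit_add_eq_0 by simp
    qed (use b Cc in simp)
    have ab: "a = ones n \<bullet> b"
    proof -
      have "(\<Sum>j<Suc n. A $$ (0, j)) = 0" using rs by simp
      then have "a + (\<Sum>j<n. b $ j) = 0" using rowsum_bord[of 0 n b C a] b Cc AE by simp
      then show ?thesis using ones_scalar[OF b] bit_add_eq_0 by simp
    qed
    have AfC: "A = f C" unfolding f_def AE ab bC ..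
    have "card (kerM A) = 2 * card (kerM C)" unfolding AfC f_def by (rule ker_case5[OF CS])
    then have "card (kerM C) = 2" using k4 by simp
    then show "A \<in> f ` {B \<in> Sym n. card (kerM B) = 2}" using AfC CS by blast
  next
    fix A assume "A \<in> f ` {B \<in> Sym n. card (kerM B) = 2}"
    then obtain B where AB: "A = f B" and BS: "B \<in> Sym n" and k2: "card (kerM B) = 2" by auto
    have Bc: "B \<in> carrier_mat n n" using Sym_carrier[OF BS] .
    have c: "B *\<^sub>v ones n \<in> carrier_vec n" using Bc by simp
    have AS: "A \<in> Sym (Suc n)" unfolding AB f_def using bord_Sym[OF c BS] .
    have rs: "(\<Sum>j<Suc n. A $$ (i, j)) = 0" if i: "i < Suc n" for i
    proof (cases i)
      case 0
      then show ?thesis unfolding AB f_def using rowsum_bord[OF i c Bc] ones_scalar[OF c] by simp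
    next
      case (Suc i')
      then have i': "i' < n" using i by simp
      show ?thesis unfolding AB f_def using rowsum_bord[OF i c Bc] Suc mult_ones[OF Bc i'] by simp
    qed
    have "card (kerM A) = 4" unfolding AB f_def using ker_case5[OF BS] k2 by simp
    then show "A \<in> ?L" using AS rs by (auto simp: Sym_def)
  qed
  moreover have "inj_on f {B \<in> Sym n. card (kerM B) = 2}"
  proof (rule inj_onI)
    fix B B' assume "B \<in> {B \<in> Sym n. card (kerM B) = 2}" "B' \<in> {B \<in> Sym n. card (kerM B) = 2}"
      and e: "f B = f B'"
    then have "B \<in> carrier_mat n n" "B' \<in> carrier_mat n n" using Sym_carrier by auto
    then show "B = B'" using bord_inj[OF e[unfolded f_def]] by simp
  qed
  ultimately have "card ?L = card {B \<in> Sym n. card (kerM B) = 2}" by (simp add: card_image)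
  also have "\<dots> = NK n 1" unfolding NK_def by simp
  finally show ?thesis .
qed

lemma rank_iff_ker4:
  fixes A :: "bit mat"
  assumes A: "A \<in> carrier_mat k k" and k: "k \<ge> 2"
  shows "vec_space.rank k A = k - 2 \<longleftrightarrow> card (kerM A) = 4"
proof -
  note R = ker_card_rank[OF A]
  have "card (kerM A) = 4 \<longleftrightarrow> (2::nat) ^ (k - vec_space.rank k A) = 2 ^ 2" using R by simp
  also have "\<dots> \<longleftrightarrow> k - vec_space.rank k A = 2" by (rule power_inject_exp) simp
  also have "\<dots> \<longleftrightarrow> vec_space.rank k A = k - 2" using R k by auto
  finally show ?thesis by simp
qed

theorem mainTheorem8:
  fixes k :: nat
  assumes "k \<ge> 2"
  shows "real (card {A :: bit mat. A \<in> carrier_mat k k \<and> transpose_mat A = A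
              \<and> vec_space.rank k A = k - 2
              \<and> (\<forall>i<k. (\<Sum>j<k. A $$ (i, j)) = 0)})
         = 2 ^ ((k - 1) choose 2) * u (k - 1) * (2 ^ (k - 1) - 1)"
proof -
  obtain m where km: "k = Suc (Suc m)" using assms by (metis add_2_eq_Suc le_Suc_ex)
  have "{A :: bit mat. A \<in> carrier_mat k k \<and> transpose_mat A = A
              \<and> vec_space.rank k A = k - 2
              \<and> (\<forall>i<k. (\<Sum>j<k. A $$ (i, j)) = 0)} =
        {A :: bit mat. A \<in> carrier_mat (Suc (Suc m)) (Suc (Suc m)) \<and> transpose_mat A = A
      \<and> (\<forall>i<Suc (Suc m). (\<Sum>j<Suc (Suc m). A $$ (i, j)) = 0) \<and> card (kerM A) = 4}"
    using rank_iff_ker4[OF _ assms] km by auto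
  then have "card {A :: bit mat. A \<in> carrier_mat k k \<and> transpose_mat A = A
              \<and> vec_space.rank k A = k - 2
              \<and> (\<forall>i<k. (\<Sum>j<k. A $$ (i, j)) = 0)} = NK (Suc m) 1"
    using main_set_card[of "Suc m"] by simp
  then have "real (card {A :: bit mat. A \<in> carrier_mat k k \<and> transpose_mat A = A
              \<and> vec_space.rank k A = k - 2
              \<and> (\<forall>i<k. (\<Sum>j<k. A $$ (i, j)) = 0)}) = (2 ^ Suc m - 1) * (2 ^ (Suc m choose 2) * u (Suc m))"
    using J_formula[of m] I_formula[of m] by simp
  also have "\<dots> = 2 ^ ((k - 1) choose 2) * u (k - 1) * (2 ^ (k - 1) - 1)" using km by simp
  finally show ?thesis .
qed


end
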